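(* (a) Let $G$ be a uniformly random ADMG on vertex set $\{1,\dots,n\}$. Then there is a constant $c>0$ such that for all sufficiently large $n$, $\mathbb{E}[|\mathrm{MEC}(G)|] \ge 2^{c n^2}$. (b) Let $H$ be a uniformly random DCG on vertex set $\{1,\dots,n\}$. Then there is a constant $c>0$ such that for all sufficiently large $n$, $\mathbb{E}[|\mathrm{MEC}(H)|] \ge 2^{c n}$.
   Context: An acyclic directed mixed graph (ADMG) on vertex set $V$ consists of a set of directed edges (ordered pairs $(v,w)$, $v\neq w$, written $v\to w$) containing no directed cycle, together with a set of bidirected edges (unordered pairs $\{v,w\}$, $v\ne w$, written $v\leftrightarrow w$). A uniformly random ADMG is uniform over all ADMGs on $V$; equivalently, a uniformly random DAG together with each bidirected edge included independently with probability $1/2$. A directed cyclic graph (DCG) on $V$ is any directed graph without self-loops (both $v\to w$ and $w\to v$ may be present; directed cycles allowed); a uniformly random DCG includes each of the $n(n-1)$ possible directed edges independently with probability $1/2$. Paths and d-separation: a path from $a$ to $b$ is a sequence $v_1,e_1,\dots,e_{k-1},v_k$ with $v_1=a\neq b=v_k$ (vertices may repeat), each $e_j$ an edge (directed in either direction, or bidirected) between $v_j$ and $v_{j+1}$. An internal vertex $v_j$ is a collider if both $e_{j-1}$ and $e_j$ have an arrowhead at $v_j$ (directed into $v_j$ or bidirected). $x$ is a descendant of $v$ if $x=v$ or there is a directed path from $v$ to $x$. A path is active given $Z\subseteq V\setminus\{a,b\}$ if every internal non-collider is not in $Z$ and every collider is in $Z$ or has a descendant in $Z$; $a,b$ are d-connected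 given $Z$ if an active path exists, else d-separated. Two graphs on the same vertex set are Markov equivalent if they have the same d-separation statements. $\mathrm{MEC}(G)$ is the set of graphs of the same model class (ADMGs in (a), DCGs in (b)) on the same vertex set that are Markov equivalent to $G$. *)

theory Defs
  imports Main "HOL-Library.Transitive_Closure_Table" Complex_Main
begin

text \<open>A mixed graph is a pair (D, B): D the set of directed edges (v,w) meaning v -> w,
  B the bidirected edges, encoded as a symmetric irreflexive relation.
  Vertex set is {1..n}.\<close>

type_synonym mgraph = "(nat \<times> nat) set \<times> (nat \<times> nat) set"

definition verts :: "nat \<Rightarrow> nat set" where
  "verts n = {1..n}"

definition is_admg :: "nat \<Rightarrow> mgraph \<Rightarrow> bool" where
  "is_admg n G \<longleftrightarrow>
     fst G \<subseteq> verts n \<times> verts n \<and> (\<forall>v. (v, v) \<notin> fst G) \<and> acyclic (fst G) \<and>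
     snd G \<subseteq> verts n \<times> verts n \<and> (\<forall>v. (v, v) \<notin> snd G) \<and> sym (snd G)"

definition is_dcg :: "nat \<Rightarrow> mgraph \<Rightarrow> bool" where
  "is_dcg n G \<longleftrightarrow>
     fst G \<subseteq> verts n \<times> verts n \<and> (\<forall>v. (v, v) \<notin> fst G) \<and> snd G = {}"

definition admgs :: "nat \<Rightarrow> mgraph set" where
  "admgs n = {G. is_admg n G}"

definition dcgs :: "nat \<Rightarrow> mgraph set" where
  "dcgs n = {G. is_dcg n G}"

text \<open>An edge traversed on a path from v_j to v_(j+1):
  Fwd = v_j -> v_(j+1), Bwd = v_j <- v_(j+1), Bid = v_j <-> v_(j+1).\<close>

datatype step = Fwd | Bwd | Bid

fun edge_ok :: "mgraph \<Rightarrow> nat \<Rightarrow> step \<Rightarrow> nat \<Rightarrow> bool" where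
  "edge_ok G v Fwd w \<longleftrightarrow> (v, w) \<in> fst G"
| "edge_ok G v Bwd w \<longleftrightarrow> (w, v) \<in> fst G"
| "edge_ok G v Bid w \<longleftrightarrow> (v, w) \<in> snd G"

text \<open>A path: vertex list vs (repetitions allowed) and edge list es, es!j between vs!j and vs!(j+1).\<close>

definition is_path :: "mgraph \<Rightarrow> nat \<Rightarrow> nat \<Rightarrow> nat list \<Rightarrow> step list \<Rightarrow> bool" where
  "is_path G a b vs es \<longleftrightarrow>
     vs \<noteq> [] \<and> hd vs = a \<and> last vs = b \<and> a \<noteq> b \<and> length es + 1 = length vs \<and>
     (\<forall>j < length es. edge_ok G (vs ! j) (es ! j) (vs ! Suc j))"

definition head_right :: "step \<Rightarrow> bool" where
  "head_right e \<longleftrightarrow> e = Fwd \<or> e = Bid"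

definition head_left :: "step \<Rightarrow> bool" where
  "head_left e \<longleftrightarrow> e = Bwd \<or> e = Bid"

text \<open>Internal vertex vs!j (0 < j < length vs - 1) is a collider.\<close>

definition collider :: "step list \<Rightarrow> nat \<Rightarrow> bool" where
  "collider es j \<longleftrightarrow> head_right (es ! (j - 1)) \<and> head_left (es ! j)"

definition descendant :: "mgraph \<Rightarrow> nat \<Rightarrow> nat \<Rightarrow> bool" where
  "descendant G v x \<longleftrightarrow> (v, x) \<in> (fst G)\<^sup>*"

definition active :: "mgraph \<Rightarrow> nat set \<Rightarrow> nat list \<Rightarrow> step list \<Rightarrow> bool" where
  "active G Z vs es \<longleftrightarrow>
     (\<forall>j. 0 < j \<and> j < length es \<longrightarrow>
        (if collider es j then (\<exists>z\<in>Z. descendant G (vs ! j) z) else vs ! j \<notin> Z))"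

definition d_connected :: "mgraph \<Rightarrow> nat \<Rightarrow> nat \<Rightarrow> nat set \<Rightarrow> bool" where
  "d_connected G a b Z \<longleftrightarrow> (\<exists>vs es. is_path G a b vs es \<and> active G Z vs es)"

definition d_separated :: "mgraph \<Rightarrow> nat \<Rightarrow> nat \<Rightarrow> nat set \<Rightarrow> bool" where
  "d_separated G a b Z \<longleftrightarrow> \<not> d_connected G a b Z"

definition markov_equiv :: "nat \<Rightarrow> mgraph \<Rightarrow> mgraph \<Rightarrow> bool" where
  "markov_equiv n G H \<longleftrightarrow>
     (\<forall>a \<in> verts n. \<forall>b \<in> verts n. \<forall>Z. a \<noteq> b \<and> Z \<subseteq> verts n - {a, b} \<longrightarrow>
        (d_separated G a b Z \<longleftrightarrow> d_separated H a b Z))"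

definition MEC :: "mgraph set \<Rightarrow> nat \<Rightarrow> mgraph \<Rightarrow> mgraph set" where
  "MEC C n G = {H \<in> C. markov_equiv n G H}"

definition expected_MEC_size :: "mgraph set \<Rightarrow> nat \<Rightarrow> real" where
  "expected_MEC_size C n = (\<Sum>G\<in>C. real (card (MEC C n G))) / real (card C)"

end

theory Submission
  imports Defs "HOL-Library.FuncSet"
begin

definition complete_g :: "nat \<Rightarrow> mgraph \<Rightarrow> bool" where
  "complete_g n G \<longleftrightarrow> (\<forall>a\<in>verts n. \<forall>b\<in>verts n. a \<noteq> b \<longrightarrow> (\<exists>e. edge_ok G a e b))"

lemma adj_dconn: "edge_ok G a e b \<Longrightarrow> a \<noteq> b \<Longrightarrow> d_connected G a b Z"
  unfolding d_connected_def is_path_def active_def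
  by (rule exI[of _ "[a,b]"], rule exI[of _ "[e]"]) auto

lemma complete_equiv: "complete_g n G \<Longrightarrow> complete_g n H \<Longrightarrow> markov_equiv n G H"
  unfolding markov_equiv_def complete_g_def d_separated_def
  by (meson adj_dconn)

lemma expect_bound:
  assumes fin: "finite C" and SC: "S \<subseteq> C" and eq: "\<And>G H. G \<in> S \<Longrightarrow> H \<in> S \<Longrightarrow> markov_equiv n G H"
    and ne: "S \<noteq> {}"
  shows "expected_MEC_size C n \<ge> real (card S) ^ 2 / real (card C)"
proof -
  have "card S * card S = (\<Sum>G\<in>S. card S)" by simp
  also have "\<dots> \<le> (\<Sum>G\<in>S. card (MEC C n G))"
  proof (rule sum_mono)
    fix G assume "G \<in> S"
    then have "S \<subseteq> MEC C n G" using SC eq unfolding MEC_def by blast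
    then show "card S \<le> card (MEC C n G)"
      by (rule card_mono[rotated]) (use fin in \<open>simp add: MEC_def\<close>)
  qed
  also have "\<dots> \<le> (\<Sum>G\<in>C. card (MEC C n G))"
    by (rule sum_mono2[OF fin SC]) auto
  finally have "real (card S * card S) \<le> real (\<Sum>G\<in>C. card (MEC C n G))" by linarith
  then have 1: "real (card S) ^ 2 \<le> (\<Sum>G\<in>C. real (card (MEC C n G)))"
    by (simp add: power2_eq_square)
  have "card C > 0" using fin SC ne
    by (metis card_gt_0_iff finite_subset subset_empty)
  then show ?thesis unfolding expected_MEC_size_def
    using 1 by (simp add: divide_right_mono)
qed

definition P :: "nat \<Rightarrow> (nat \<times> nat) set" where
  "P n = {(i,j). 1 \<le> i \<and> i < j \<and> j \<le> n}"

lemma P_finite: "finite (P n)"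
  by (rule finite_subset[of _ "{0..n} \<times> {0..n}"]) (auto simp: P_def)

lemma P_card: "2 * card (P n) = n * (n - 1)"
proof (induction n)
  case 0
  have "P 0 = {}" by (auto simp: P_def)
  then show ?case by simp
next
  case (Suc n)
  have eq: "P (Suc n) = P n \<union> (\<lambda>i. (i, Suc n)) ` {1..n}"
    by (auto simp: P_def)
  have d: "P n \<inter> (\<lambda>i. (i, Suc n)) ` {1..n} = {}" by (auto simp: P_def)
  have "card (P (Suc n)) = card (P n) + n"
    unfolding eq by (subst card_Un_disjoint) (use d in \<open>auto simp: P_finite card_image inj_on_def\<close>)
  then show ?case using Suc by (cases n) (auto simp: algebra_simps)
qed

definition F :: "nat \<Rightarrow> ((nat \<times> nat) \<Rightarrow> nat) set" where
  "F n = PiE (P n) (\<lambda>_. {0,1,2})"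

lemma F_card: "card (F n) = 3 ^ card (P n)"
  unfolding F_def by (simp add: card_PiE P_finite) (simp add: eval_nat_numeral)

lemma P_mem: "(i,j) \<in> P n \<longleftrightarrow> 1 \<le> i \<and> i < j \<and> j \<le> n" by (simp add: P_def)

lemma F_ext:
  assumes "f \<in> F n" "g \<in> F n" "\<And>i j. (i,j) \<in> P n \<Longrightarrow> f (i,j) = g (i,j)"
  shows "f = g"
  using assms unfolding F_def by (metis PiE_ext prod.collapse)

definition Dd :: "nat \<Rightarrow> ((nat \<times> nat) \<Rightarrow> nat) \<Rightarrow> (nat \<times> nat) set" where
  "Dd n f = {(i,j). (i,j) \<in> P n \<and> f (i,j) \<noteq> 1} \<union> {(j,i) | i j. (i,j) \<in> P n \<and> f (i,j) \<noteq> 0}"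

lemma F_val: "f \<in> F n \<Longrightarrow> p \<in> P n \<Longrightarrow> f p = 0 \<or> f p = 1 \<or> f p = 2"
  unfolding F_def using PiE_mem by fastforce

lemma Dd_fwd: "(i,j) \<in> P n \<Longrightarrow> (i,j) \<in> Dd n f \<longleftrightarrow> f (i,j) \<noteq> 1"
  unfolding Dd_def P_def by auto

lemma Dd_bwd: "(i,j) \<in> P n \<Longrightarrow> (j,i) \<in> Dd n f \<longleftrightarrow> f (i,j) \<noteq> 0"
  unfolding Dd_def P_def by auto

lemma Dd_inj: "inj_on (\<lambda>f. (Dd n f, {}::(nat\<times>nat) set)) (F n)"
proof (rule inj_onI)
  fix f g assume f: "f \<in> F n" and g: "g \<in> F n" and e: "(Dd n f, {}::(nat\<times>nat) set) = (Dd n g, {})"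
  show "f = g"
  proof (rule F_ext[OF f g])
    fix i j assume p: "(i,j) \<in> P n"
    have 1: "f (i,j) \<noteq> 1 \<longleftrightarrow> g (i,j) \<noteq> 1" using Dd_fwd[OF p, of f] Dd_fwd[OF p, of g] e by simp
    have 2: "f (i,j) \<noteq> 0 \<longleftrightarrow> g (i,j) \<noteq> 0" using Dd_bwd[OF p, of f] Dd_bwd[OF p, of g] e by simp
    show "f (i,j) = g (i,j)" using F_val[OF f p] F_val[OF g p] 1 2 by auto
  qed
qed

lemma Dd_dcg: "f \<in> F n \<Longrightarrow> (Dd n f, {}) \<in> dcgs n"
  unfolding dcgs_def is_dcg_def Dd_def P_def verts_def by auto

lemma Dd_complete: assumes f: "f \<in> F n" shows "complete_g n (Dd n f, {})"
  unfolding complete_g_def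
proof (intro ballI impI)
  fix a b assume a: "a \<in> verts n" and b: "b \<in> verts n" and ab: "a \<noteq> b"
  show "\<exists>e. edge_ok (Dd n f, {}) a e b"
  proof (cases "a < b")
    case True
    then have p: "(a,b) \<in> P n" using a b by (auto simp: P_def verts_def)
    show ?thesis
    proof (cases "f (a,b) = 1")
      case True
      then show ?thesis using Dd_bwd[OF p, of f] by (intro exI[of _ Bwd]) simp
    next
      case False
      then show ?thesis using Dd_fwd[OF p, of f] by (intro exI[of _ Fwd]) simp
    qed
  next
    case False
    then have p: "(b,a) \<in> P n" using a b ab by (auto simp: P_def verts_def)
    show ?thesis
    proof (cases "f (b,a) = 1")
      case True
      then show ?thesis using Dd_bwd[OF p, of f] by (intro exI[of _ Fwd]) simp
    next
      case False
      then show ?thesis using Dd_fwd[OF p, of f] by (intro exI[of _ Bwd]) simp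
    qed
  qed
qed

definition offd :: "nat \<Rightarrow> (nat \<times> nat) set" where
  "offd n = {(i,j). i \<in> verts n \<and> j \<in> verts n \<and> i \<noteq> j}"

lemma offd_sub: "offd n \<subseteq> P n \<union> (\<lambda>(i,j). (j,i)) ` P n"
proof
  fix x assume "x \<in> offd n"
  then obtain i j where x: "x = (i,j)" "i \<in> verts n" "j \<in> verts n" "i \<noteq> j" by (auto simp: offd_def)
  show "x \<in> P n \<union> (\<lambda>(i,j). (j,i)) ` P n"
  proof (cases "i < j")
    case True then show ?thesis using x by (auto simp: P_def verts_def)
  next
    case False
    then have "(j,i) \<in> P n" using x by (auto simp: P_def verts_def)
    then show ?thesis using x by (auto intro: image_eqI[of _ _ "(j,i)"])
  qed
qed

lemma offd_card: "card (offd n) \<le> 2 * card (P n)"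
proof -
  have "card (offd n) \<le> card (P n \<union> (\<lambda>(i,j). (j,i)) ` P n)"
    by (rule card_mono[OF _ offd_sub]) (simp add: P_finite)
  also have "\<dots> \<le> card (P n) + card ((\<lambda>(i,j). (j,i)) ` P n)" by (rule card_Un_le)
  also have "\<dots> \<le> card (P n) + card (P n)" using card_image_le[OF P_finite[of n], of "\<lambda>(i,j). (j,i)"] by linarith
  finally show ?thesis by simp
qed

lemma offd_finite: "finite (offd n)"
  by (rule finite_subset[of _ "verts n \<times> verts n"]) (auto simp: offd_def verts_def)

lemma dcgs_sub: "dcgs n \<subseteq> (\<lambda>D. (D, {})) ` Pow (offd n)"
proof
  fix G assume "G \<in> dcgs n"
  then show "G \<in> (\<lambda>D. (D, {})) ` Pow (offd n)"
  proof (intro image_eqI[of _ _ "fst G"])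
    have "snd G = {}" using \<open>G \<in> dcgs n\<close> by (simp add: dcgs_def is_dcg_def)
    then show "G = (fst G, {})" by (simp add: prod_eq_iff)
    show "fst G \<in> Pow (offd n)" using \<open>G \<in> dcgs n\<close> unfolding dcgs_def is_dcg_def offd_def
      by blast
  qed
qed

lemma dcgs_finite: "finite (dcgs n)"
  using dcgs_sub offd_finite by (meson finite_Pow_iff finite_imageI finite_subset)

lemma dcgs_card: "card (dcgs n) \<le> 4 ^ card (P n)"
proof -
  have "card (dcgs n) \<le> card ((\<lambda>D. (D, {}::(nat\<times>nat) set)) ` Pow (offd n))"
    by (rule card_mono[OF _ dcgs_sub]) (simp add: offd_finite)
  also have "\<dots> \<le> card (Pow (offd n))" by (rule card_image_le) (simp add: offd_finite)
  also have "\<dots> = 2 ^ card (offd n)" by (simp add: card_Pow offd_finite)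
  also have "\<dots> \<le> 2 ^ (2 * card (P n))" by (rule power_increasing[OF offd_card]) simp
  also have "\<dots> = 4 ^ card (P n)" by (simp add: power_mult)
  finally show ?thesis .
qed

lemma dcg_bound: "expected_MEC_size (dcgs n) n \<ge> (9/4) ^ card (P n)"
proof -
  let ?S = "(\<lambda>f. (Dd n f, {}::(nat\<times>nat) set)) ` F n"
  have cS: "card ?S = 3 ^ card (P n)" using card_image[OF Dd_inj] F_card by simp
  have ne: "?S \<noteq> {}" using cS by auto
  have "expected_MEC_size (dcgs n) n \<ge> real (card ?S) ^ 2 / real (card (dcgs n))"
    by (rule expect_bound[OF dcgs_finite]) (use Dd_dcg Dd_complete complete_equiv ne in auto)
  moreover have "real (card ?S) ^ 2 / real (card (dcgs n)) \<ge> (9/4) ^ card (P n)"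
  proof -
    have c: "real (card (dcgs n)) \<le> 4 ^ card (P n)" using dcgs_card
      by (metis of_nat_le_iff of_nat_numeral of_nat_power)
    have "(9/4::real) ^ card (P n) = (3 ^ card (P n)) ^ 2 / 4 ^ card (P n)"
    proof -
      have "(3::real) ^ card (P n) * 3 ^ card (P n) = (3 * 3) ^ card (P n)" by (rule power_mult_distrib[symmetric])
      then show ?thesis by (simp add: power_divide power2_eq_square)
    qed
    also have "\<dots> \<le> real (card ?S) ^ 2 / real (card (dcgs n))"
    proof (rule frac_le)
      show "real (card (dcgs n)) \<le> 4 ^ card (P n)" by (rule c)
      show "(3 ^ card (P n))\<^sup>2 \<le> (real (card ?S))\<^sup>2" using cS by simp
      have "card ?S \<le> card (dcgs n)" by (rule card_mono[OF dcgs_finite]) (use Dd_dcg in auto)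
      moreover have "(0::nat) < 3 ^ card (P n)" by simp
      ultimately show "0 < real (card (dcgs n))" using cS by linarith
    qed simp
    finally show ?thesis .
  qed
  ultimately show ?thesis by linarith
qed


lemma acyc_lt: "(r::(nat\<times>nat) set) \<subseteq> {(i,j). i < j} \<Longrightarrow> acyclic r"
  by (rule wf_acyclic, rule wf_subset[OF wf_less]) auto

definition Da :: "nat \<Rightarrow> ((nat \<times> nat) \<Rightarrow> nat) \<Rightarrow> (nat \<times> nat) set" where
  "Da n f = {p. p \<in> P n \<and> f p \<noteq> 1}"

definition Ba :: "nat \<Rightarrow> ((nat \<times> nat) \<Rightarrow> nat) \<Rightarrow> (nat \<times> nat) set" where
  "Ba n f = {p. p \<in> P n \<and> f p \<noteq> 0} \<union> {(j,i) | i j. (i,j) \<in> P n \<and> f (i,j) \<noteq> 0}"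

lemma Da_fwd: "(i,j) \<in> P n \<Longrightarrow> (i,j) \<in> Da n f \<longleftrightarrow> f (i,j) \<noteq> 1"
  unfolding Da_def by auto

lemma Ba_fwd: "(i,j) \<in> P n \<Longrightarrow> (i,j) \<in> Ba n f \<longleftrightarrow> f (i,j) \<noteq> 0"
  unfolding Ba_def P_def by auto

lemma Ba_bwd: "(i,j) \<in> P n \<Longrightarrow> (j,i) \<in> Ba n f \<longleftrightarrow> f (i,j) \<noteq> 0"
  unfolding Ba_def P_def by auto

lemma Ga_inj: "inj_on (\<lambda>f. (Da n f, Ba n f)) (F n)"
proof (rule inj_onI)
  fix f g assume f: "f \<in> F n" and g: "g \<in> F n" and e: "(Da n f, Ba n f) = (Da n g, Ba n g)"
  show "f = g"
  proof (rule F_ext[OF f g])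
    fix i j assume p: "(i,j) \<in> P n"
    have 1: "f (i,j) \<noteq> 1 \<longleftrightarrow> g (i,j) \<noteq> 1" using Da_fwd[OF p, of f] Da_fwd[OF p, of g] e by simp
    have 2: "f (i,j) \<noteq> 0 \<longleftrightarrow> g (i,j) \<noteq> 0" using Ba_fwd[OF p, of f] Ba_fwd[OF p, of g] e by simp
    show "f (i,j) = g (i,j)" using F_val[OF f p] F_val[OF g p] 1 2 by auto
  qed
qed

lemma Ga_admg: "(Da n f, Ba n f) \<in> admgs n"
proof -
  have "Da n f \<subseteq> {(i,j). i < j}" unfolding Da_def P_def by auto
  then have "acyclic (Da n f)" by (rule acyc_lt)
  moreover have "sym (Ba n f)" unfolding Ba_def sym_def by auto
  moreover have "Da n f \<subseteq> verts n \<times> verts n" "\<forall>v. (v,v) \<notin> Da n f"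
    "Ba n f \<subseteq> verts n \<times> verts n" "\<forall>v. (v,v) \<notin> Ba n f"
    unfolding Da_def Ba_def P_def verts_def by auto
  ultimately show ?thesis unfolding admgs_def is_admg_def by simp
qed

lemma Ga_complete: assumes f: "f \<in> F n" shows "complete_g n (Da n f, Ba n f)"
  unfolding complete_g_def
proof (intro ballI impI)
  fix a b assume a: "a \<in> verts n" and b: "b \<in> verts n" and ab: "a \<noteq> b"
  show "\<exists>e. edge_ok (Da n f, Ba n f) a e b"
  proof (cases "a < b")
    case True
    then have p: "(a,b) \<in> P n" using a b by (auto simp: P_def verts_def)
    show ?thesis
    proof (cases "f (a,b) = 1")
      case True
      then show ?thesis using Ba_fwd[OF p, of f] by (intro exI[of _ Bid]) simp
    next
      case False
      then show ?thesis using Da_fwd[OF p, of f] by (intro exI[of _ Fwd]) simp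
    qed
  next
    case False
    then have p: "(b,a) \<in> P n" using a b ab by (auto simp: P_def verts_def)
    show ?thesis
    proof (cases "f (b,a) = 1")
      case True
      then show ?thesis using Ba_bwd[OF p, of f] by (intro exI[of _ Bid]) simp
    next
      case False
      then show ?thesis using Da_fwd[OF p, of f] by (intro exI[of _ Bwd]) simp
    qed
  qed
qed

definition code :: "(nat \<times> nat) set \<Rightarrow> nat \<times> nat \<Rightarrow> nat" where
  "code D p = (if p \<in> D then 1 else if (snd p, fst p) \<in> D then 2 else 0)"

definition enc :: "nat \<Rightarrow> mgraph \<Rightarrow> ((nat \<times> nat) \<Rightarrow> nat) \<times> (nat \<times> nat) set" where
  "enc n G = (restrict (code (fst G)) (P n), snd G \<inter> P n)"

lemma enc_D_sub:
  assumes G1: "G1 \<in> admgs n" and G2: "G2 \<in> admgs n"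
    and c: "\<And>p. p \<in> P n \<Longrightarrow> code (fst G1) p = code (fst G2) p"
  shows "fst G1 \<subseteq> fst G2"
proof
  fix x assume x: "x \<in> fst G1"
  obtain a b where xab: "x = (a,b)" by (cases x)
  have a: "a \<in> verts n" and b: "b \<in> verts n" and ab: "a \<noteq> b"
    using G1 x xab unfolding admgs_def is_admg_def by auto
  have ac: "acyclic (fst G1)" using G1 unfolding admgs_def is_admg_def by simp
  show "x \<in> fst G2"
  proof (cases "a < b")
    case True
    then have p: "(a,b) \<in> P n" using a b by (auto simp: P_def verts_def)
    have "code (fst G1) (a,b) = 1" using x xab by (simp add: code_def)
    then have "code (fst G2) (a,b) = 1" using c[OF p] by simp
    then show ?thesis using xab by (simp add: code_def split: if_splits)
  next
    case False
    then have p: "(b,a) \<in> P n" using a b ab by (auto simp: P_def verts_def)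
    have nba: "(b,a) \<notin> fst G1"
    proof
      assume "(b,a) \<in> fst G1"
      then have "(a,a) \<in> (fst G1)\<^sup>+" using x xab by (meson trancl.simps)
      then show False using ac by (simp add: acyclic_def)
    qed
    have "code (fst G1) (b,a) = 2" using x xab nba by (simp add: code_def)
    then have "code (fst G2) (b,a) = 2" using c[OF p] by simp
    then show ?thesis using xab by (simp add: code_def split: if_splits)
  qed
qed

lemma enc_B_sub:
  assumes G1: "G1 \<in> admgs n" and G2: "G2 \<in> admgs n"
    and c: "snd G1 \<inter> P n = snd G2 \<inter> P n"
  shows "snd G1 \<subseteq> snd G2"
proof
  fix x assume x: "x \<in> snd G1"
  obtain a b where xab: "x = (a,b)" by (cases x)
  have a: "a \<in> verts n" and b: "b \<in> verts n" and ab: "a \<noteq> b"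
    using G1 x xab unfolding admgs_def is_admg_def by auto
  have s1: "sym (snd G1)" and s2: "sym (snd G2)" using G1 G2 unfolding admgs_def is_admg_def by auto
  show "x \<in> snd G2"
  proof (cases "a < b")
    case True
    then have p: "(a,b) \<in> P n" using a b by (auto simp: P_def verts_def)
    then show ?thesis using c x xab by blast
  next
    case False
    then have p: "(b,a) \<in> P n" using a b ab by (auto simp: P_def verts_def)
    have "(b,a) \<in> snd G1" using s1 x xab by (meson symD)
    then have "(b,a) \<in> snd G2" using c p by blast
    then show ?thesis using s2 xab by (meson symD)
  qed
qed

lemma enc_inj: "inj_on (enc n) (admgs n)"
proof (rule inj_onI)
  fix G1 G2 assume G1: "G1 \<in> admgs n" and G2: "G2 \<in> admgs n" and e: "enc n G1 = enc n G2"
  have r: "restrict (code (fst G1)) (P n) = restrict (code (fst G2)) (P n)"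
    and b: "snd G1 \<inter> P n = snd G2 \<inter> P n" using e by (auto simp: enc_def)
  have c: "\<And>p. p \<in> P n \<Longrightarrow> code (fst G1) p = code (fst G2) p"
    using r by (metis restrict_apply')
  have "fst G1 = fst G2" using enc_D_sub[OF G1 G2 c] enc_D_sub[OF G2 G1] c by (metis subset_antisym)
  moreover have "snd G1 = snd G2" using enc_B_sub[OF G1 G2 b] enc_B_sub[OF G2 G1] b by (metis subset_antisym)
  ultimately show "G1 = G2" by (simp add: prod_eq_iff)
qed

lemma code_range: "code D p \<in> {0,1,2}" by (simp add: code_def)

lemma enc_range: "enc n ` admgs n \<subseteq> F n \<times> Pow (P n)"
  unfolding enc_def F_def using code_range by (auto simp: restrict_PiE_iff) (metis code_range insertE gr_implies_not0 One_nat_def empty_iff)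

lemma admgs_card: "card (admgs n) \<le> 6 ^ card (P n)"
proof -
  have fin: "finite (F n \<times> Pow (P n))" unfolding F_def by (simp add: P_finite finite_PiE)
  have "card (admgs n) = card (enc n ` admgs n)" by (rule card_image[OF enc_inj, symmetric])
  also have "\<dots> \<le> card (F n \<times> Pow (P n))" by (rule card_mono[OF fin enc_range])
  also have "\<dots> = 3 ^ card (P n) * 2 ^ card (P n)" by (simp add: card_cartesian_product F_card card_Pow P_finite)
  also have "\<dots> = 6 ^ card (P n)" by (simp add: power_mult_distrib[symmetric])
  finally show ?thesis .
qed

lemma admgs_finite: "finite (admgs n)"
proof -
  have fin: "finite (F n \<times> Pow (P n))" unfolding F_def by (simp add: P_finite finite_PiE)
  have "finite (enc n ` admgs n)" by (rule finite_subset[OF enc_range fin])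
  then show ?thesis using finite_image_iff[OF enc_inj] by simp
qed

lemma admg_bound: "expected_MEC_size (admgs n) n \<ge> (3/2) ^ card (P n)"
proof -
  let ?S = "(\<lambda>f. (Da n f, Ba n f)) ` F n"
  have cS: "card ?S = 3 ^ card (P n)" using card_image[OF Ga_inj] F_card by simp
  have ne: "?S \<noteq> {}" using cS by auto
  have "expected_MEC_size (admgs n) n \<ge> real (card ?S) ^ 2 / real (card (admgs n))"
    by (rule expect_bound[OF admgs_finite]) (use Ga_admg Ga_complete complete_equiv ne in auto)
  moreover have "real (card ?S) ^ 2 / real (card (admgs n)) \<ge> (3/2) ^ card (P n)"
  proof -
    have c: "real (card (admgs n)) \<le> 6 ^ card (P n)" using admgs_card
      by (metis of_nat_le_iff of_nat_numeral of_nat_power)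
    have "(3/2::real) ^ card (P n) = (3 ^ card (P n)) ^ 2 / 6 ^ card (P n)"
    proof -
      have "(6::real) ^ card (P n) = 2 ^ card (P n) * 3 ^ card (P n)" by (simp flip: power_mult_distrib)
      then show ?thesis by (simp add: power_divide power2_eq_square)
    qed
    also have "\<dots> \<le> real (card ?S) ^ 2 / real (card (admgs n))"
    proof (rule frac_le)
      show "real (card (admgs n)) \<le> 6 ^ card (P n)" by (rule c)
      show "(3 ^ card (P n))\<^sup>2 \<le> (real (card ?S))\<^sup>2" using cS by simp
      have "card ?S \<le> card (admgs n)" by (rule card_mono[OF admgs_finite]) (use Ga_admg in auto)
      moreover have "(0::nat) < 3 ^ card (P n)" by simp
      ultimately show "0 < real (card (admgs n))" using cS by linarith
    qed simp
    finally show ?thesis .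
  qed
  ultimately show ?thesis by linarith
qed


lemma P_real: "2 * real (card (P n)) = real n * (real n - 1)"
proof (cases n)
  case 0
  then show ?thesis using P_card[of n] by simp
next
  case (Suc k)
  have "real (2 * card (P n)) = real (n * (n - 1))" using P_card[of n] by simp
  then show ?thesis using Suc by (simp add: of_nat_diff algebra_simps)
qed

lemma part_a: "\<forall>\<^sub>F n in sequentially. expected_MEC_size (admgs n) n \<ge> 2 powr (1/8 * real n ^ 2)"
proof (rule eventually_sequentiallyI[of 2])
  fix n :: nat assume n: "2 \<le> n"
  let ?m = "card (P n)"
  have rn: "real n \<ge> 2" using n by simp
  have "1/8 * real n ^ 2 \<le> real ?m / 2"
  proof -
    have "2 * real n \<le> real n * real n" using rn by (intro mult_right_mono) auto
    then show ?thesis using P_real[of n] by (simp add: power2_eq_square algebra_simps)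
  qed
  then have "2 powr (1/8 * real n ^ 2) \<le> 2 powr (real ?m / 2)" by simp
  also have "\<dots> = (2 powr (1/2)) ^ ?m"
    by (simp add: powr_realpow[symmetric] powr_powr)
  also have "\<dots> = sqrt 2 ^ ?m" by (simp add: powr_half_sqrt)
  also have "\<dots> \<le> (3/2) ^ ?m"
  proof (rule power_mono)
    have "sqrt 2 \<le> sqrt ((3/2)^2)" by (rule real_sqrt_le_mono) (simp add: power2_eq_square)
    then show "sqrt 2 \<le> 3/2" by simp
  qed simp
  also have "\<dots> \<le> expected_MEC_size (admgs n) n" by (rule admg_bound)
  finally show "expected_MEC_size (admgs n) n \<ge> 2 powr (1/8 * real n ^ 2)" .
qed

lemma part_b: "\<forall>\<^sub>F n in sequentially. expected_MEC_size (dcgs n) n \<ge> 2 powr (1 * real n)"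
proof (rule eventually_sequentiallyI[of 3])
  fix n :: nat assume n: "3 \<le> n"
  let ?m = "card (P n)"
  have rn: "real n \<ge> 3" using n by simp
  have "real n \<le> real ?m"
  proof -
    have "real n * 2 \<le> real n * (real n - 1)" using rn by (intro mult_left_mono) auto
    then show ?thesis using P_real[of n] by linarith
  qed
  then have "2 powr (1 * real n) \<le> 2 powr (real ?m)" by simp
  also have "\<dots> = 2 ^ ?m" by (simp add: powr_realpow)
  also have "\<dots> \<le> (9/4) ^ ?m" by (rule power_mono) simp_all
  also have "\<dots> \<le> expected_MEC_size (dcgs n) n" by (rule dcg_bound)
  finally show "expected_MEC_size (dcgs n) n \<ge> 2 powr (1 * real n)" .
qed

theorem theorem2:
  shows "(\<exists>c>0. \<forall>\<^sub>F n in sequentially.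
            expected_MEC_size (admgs n) n \<ge> 2 powr (c * real n ^ 2))
       \<and> (\<exists>c>0. \<forall>\<^sub>F n in sequentially.
            expected_MEC_size (dcgs n) n \<ge> 2 powr (c * real n))"
proof
  show "\<exists>c>0. \<forall>\<^sub>F n in sequentially. expected_MEC_size (admgs n) n \<ge> 2 powr (c * real n ^ 2)"
    by (rule exI[of _ "1/8"]) (simp add: part_a[simplified])
  show "\<exists>c>0. \<forall>\<^sub>F n in sequentially. expected_MEC_size (dcgs n) n \<ge> 2 powr (c * real n)"
    by (rule exI[of _ 1]) (simp add: part_b[simplified])
qed

end
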